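(* Let $f,g$ be real analytic functions on $[-1,1]$ and consider the Abel equation $$x'(t)=f(t)x^3+g(t)x^2,\qquad t\in[-1,1].$$ If this equation has a center at $x=0$, then $$m_k=\int_{-1}^1 f(t)\,(G(t))^k\,dt=0,\qquad k=0,1,2,$$ where $G(t)=\int_{-1}^t g(s)\,ds$.
   Context: The Abel equation $x'=f(t)x^3+g(t)x^2$ on $[-1,1]$ (with $x$ real) is said to have a center at $x=0$ if every solution $x(t)$ whose initial value $x(-1)$ is small enough in absolute value is defined on $[-1,1]$ and satisfies $x(-1)=x(1)$. *)

theory Defs
  imports "HOL-Analysis.Analysis"
begin

definition real_analytic_on :: "(real \<Rightarrow> real) \<Rightarrow> real set \<Rightarrow> bool" where
  "real_analytic_on f S \<longleftrightarrow>
     (\<forall>x0\<in>S. \<exists>r>0. \<exists>a::nat \<Rightarrow> real.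
        \<forall>y\<in>S. \<bar>y - x0\<bar> < r \<longrightarrow> (\<lambda>n. a n * (y - x0) ^ n) sums f y)"

definition abel_solution :: "(real \<Rightarrow> real) \<Rightarrow> (real \<Rightarrow> real) \<Rightarrow> (real \<Rightarrow> real) \<Rightarrow> bool" where
  "abel_solution f g x \<longleftrightarrow>
     (\<forall>t\<in>{-1..1}. (x has_real_derivative (f t * (x t) ^ 3 + g t * (x t) ^ 2))
                     (at t within {-1..1}))"

definition abel_center :: "(real \<Rightarrow> real) \<Rightarrow> (real \<Rightarrow> real) \<Rightarrow> bool" where
  "abel_center f g \<longleftrightarrow>
     (\<exists>\<delta>>0. \<forall>x0. \<bar>x0\<bar> < \<delta> \<longrightarrow>
        (\<exists>x. abel_solution f g x \<and> x (-1) = x0) \<and>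
        (\<forall>x. abel_solution f g x \<and> x (-1) = x0 \<longrightarrow> x 1 = x (-1)))"

end

theory Submission
  imports Defs
begin


lemma analytic_cont:
  assumes "real_analytic_on f {-1..1}"
  shows "continuous_on {-1..1} f"
  unfolding continuous_on_eq_continuous_within
proof
  fix x0 :: real assume x0: "x0 \<in> {-1..1}"
  from assms x0 obtain r a where r: "r > 0" and
    sm: "\<forall>y\<in>{-1..1}. \<bar>y - x0\<bar> < r \<longrightarrow> (\<lambda>n. a n * (y - x0) ^ n) sums f y"
    unfolding real_analytic_on_def by blast
  define \<rho> where "\<rho> = min (r/2) 1"
  define y1 where "y1 = (if x0 \<le> 0 then x0 + \<rho> else x0 - \<rho>)"
  have rho: "\<rho> > 0" "\<rho> < r" "\<rho> \<le> 1" using r by (auto simp: \<rho>_def)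
  have y1: "y1 \<in> {-1..1}" "\<bar>y1 - x0\<bar> = \<rho>" using x0 rho by (auto simp: y1_def)
  have "summable (\<lambda>n. a n * (y1 - x0) ^ n)"
    using sm y1 rho sums_summable by fastforce
  hence c0: "isCont (\<lambda>z. \<Sum>n. a n * z ^ n) 0"
    by (rule isCont_powser) (use y1 rho in auto)
  have "continuous (at x0) (\<lambda>y. \<Sum>n. a n * (y - x0) ^ n)"
  proof -
    have "isCont (\<lambda>y. y - x0) x0" by simp
    from isCont_o2[OF this] c0 show ?thesis by simp
  qed
  hence "continuous (at x0 within {-1..1}) (\<lambda>y. \<Sum>n. a n * (y - x0) ^ n)"
    by (rule continuous_at_imp_continuous_within)
  thus "continuous (at x0 within {-1..1}) f"
  proof (rule continuous_transform_within[OF _ r x0])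
    fix y assume "y \<in> {-1..1}" "dist y x0 < r"
    thus "(\<Sum>n. a n * (y - x0) ^ n) = f y" using sm sums_unique
      by (metis dist_real_def)
  qed
qed

lemma deriv_bound:
  fixes x D :: "real \<Rightarrow> real"
  assumes "-1 \<le> a" "a \<le> b" "b \<le> 1"
    and der: "\<forall>t\<in>{-1..1}. (x has_real_derivative D t) (at t within {-1..1})"
    and bd: "\<And>t. a < t \<Longrightarrow> t < b \<Longrightarrow> \<bar>D t\<bar> \<le> B"
  shows "\<bar>x b - x a\<bar> \<le> B * (b - a)"
proof (cases "a = b")
  case True thus ?thesis by simp
next
  case False
  hence ab: "a < b" using assms by simp
  have cont: "continuous_on {-1..1} x" using der by (intro DERIV_continuous_on) auto
  have "continuous_on {a..b} x" using cont by (rule continuous_on_subset) (use assms in auto)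
  moreover have dat: "(x has_real_derivative D t) (at t)" if "a < t" "t < b" for t
  proof -
    have "(x has_real_derivative D t) (at t within {-1..1})" using der that assms by auto
    moreover have "at t within {-1..1} = at t" using that assms by (intro at_within_Icc_at) auto
    ultimately show ?thesis by simp
  qed
  ultimately obtain l z where z: "a < z" "z < b" "DERIV x z :> l" "x b - x a = (b - a) * l"
    using MVT[OF ab] by (metis real_differentiable_def)
  have "l = D z" using DERIV_unique[OF z(3) dat[OF z(1,2)]] .
  hence "\<bar>x b - x a\<bar> = (b - a) * \<bar>D z\<bar>" using z ab by (simp add: abs_mult)
  also have "\<dots> \<le> (b - a) * B" using bd[OF z(1,2)] ab by (intro mult_left_mono) auto
  finally show ?thesis by (simp add: mult.commute)
qed

lemma absmul: "\<bar>a::real\<bar> \<le> A \<Longrightarrow> \<bar>b\<bar> \<le> B \<Longrightarrow> \<bar>a*b\<bar> \<le> A*B"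
  by (metis abs_ge_zero abs_mult mult_mono order_trans)



lemma xbound:
  fixes f g x :: "real \<Rightarrow> real"
  assumes fb: "\<forall>t\<in>{-1..1}. \<bar>f t\<bar> \<le> M" and gb: "\<forall>t\<in>{-1..1}. \<bar>g t\<bar> \<le> M"
    and sol: "abel_solution f g x" and x0: "x (-1) = e"
    and e: "0 < e" "e \<le> 1" "48 * M * e \<le> 1"
  shows "\<forall>t\<in>{-1..1}. \<bar>x t - e\<bar> \<le> 24 * M * e^2"
proof -
  define D where "D t = f t * (x t) ^ 3 + g t * (x t) ^ 2" for t
  have der: "\<forall>t\<in>{-1..1}. (x has_real_derivative D t) (at t within {-1..1})"
    using sol unfolding abel_solution_def D_def by blast
  have M0: "M \<ge> 0" using fb[rule_format, of 0] by auto
  have Dbd: "\<bar>D t\<bar> \<le> 12 * M * e^2" if "t \<in> {-1..1}" "\<bar>x t\<bar> \<le> 2 * e" for t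
  proof -
    have x3: "\<bar>x t ^ 3\<bar> \<le> 8 * e^2"
    proof -
      have "\<bar>x t ^ 3\<bar> = \<bar>x t\<bar>^3" by (simp add: power_abs)
      also have "\<dots> \<le> (2*e)^3" by (rule power_mono) (use that in auto)
      also have "\<dots> = 8 * e^2 * e" by (simp add: power3_eq_cube power2_eq_square)
      also have "\<dots> \<le> 8 * e^2 * 1" using e by (intro mult_left_mono) auto
      finally show ?thesis by simp
    qed
    have x2: "\<bar>x t ^ 2\<bar> \<le> 4 * e^2"
    proof -
      have "\<bar>x t ^ 2\<bar> = \<bar>x t\<bar>^2" by (simp add: power_abs)
      also have "\<dots> \<le> (2*e)^2" by (rule power_mono) (use that in auto)
      finally show ?thesis by (simp add: power2_eq_square)
    qed
    have "\<bar>D t\<bar> \<le> \<bar>f t * x t ^ 3\<bar> + \<bar>g t * x t ^ 2\<bar>" unfolding D_def by (rule abs_triangle_ineq)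
    also have "\<dots> \<le> M * (8 * e^2) + M * (4 * e^2)"
      using absmul[OF _ x3, of "f t" M] absmul[OF _ x2, of "g t" M] fb gb that by (intro add_mono) auto
    finally show ?thesis by (simp add: algebra_simps)
  qed
  have cont: "continuous_on {-1..1} x" using der by (intro DERIV_continuous_on) auto
  have small: "\<forall>t\<in>{-1..1}. \<bar>x t\<bar> < 2 * e"
  proof (rule ccontr)
    assume nt: "\<not> ?thesis"
    define T where "T = {-1..1} \<inter> (\<lambda>t. \<bar>x t\<bar>) -` {2*e..}"
    have Tne: "T \<noteq> {}" using nt by (auto simp: T_def)
    have "closed T" unfolding T_def
      by (intro continuous_closed_preimage continuous_intros cont)
    moreover have "bdd_below T" unfolding T_def by (rule bdd_belowI[of _ "-1"]) auto
    ultimately have t1T: "Inf T \<in> T" using Tne closed_contains_Inf by blast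
    define t1 where "t1 = Inf T"
    have t1: "t1 \<in> {-1..1}" "2 * e \<le> \<bar>x t1\<bar>" using t1T by (auto simp: T_def t1_def)
    have below: "\<bar>x s\<bar> < 2 * e" if "-1 \<le> s" "s < t1" for s
    proof (rule ccontr)
      assume "\<not> \<bar>x s\<bar> < 2 * e"
      hence "s \<in> T" using that t1 by (auto simp: T_def)
      hence "t1 \<le> s" unfolding t1_def using \<open>bdd_below T\<close> by (rule cInf_lower)
      thus False using that by simp
    qed
    have "\<bar>x t1 - x (-1)\<bar> \<le> (12 * M * e^2) * (t1 - (-1))"
      using t1 by (intro deriv_bound[OF _ _ _ der]) (auto intro!: Dbd less_imp_le[OF below])
    also have "\<dots> \<le> (12 * M * e^2) * 2" using t1 M0 by (intro mult_left_mono) auto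
    also have "\<dots> = (48 * M * e) * e / 2" by (simp add: power2_eq_square)
    also have "\<dots> \<le> 1 * e / 2" using e by (intro divide_right_mono mult_right_mono) auto
    finally have "\<bar>x t1 - e\<bar> \<le> e / 2" using x0 by simp
    thus False using t1 e by linarith
  qed
  show ?thesis
  proof
    fix t :: real assume t: "t \<in> {-1..1}"
    have "\<bar>x t - x (-1)\<bar> \<le> (12 * M * e^2) * (t - (-1))"
      using t small by (intro deriv_bound[OF _ _ _ der]) (auto intro!: Dbd less_imp_le[of "\<bar>x _\<bar>"])
    also have "\<dots> \<le> (12 * M * e^2) * 2" using t M0 by (intro mult_left_mono) auto
    finally show "\<bar>x t - e\<bar> \<le> 24 * M * e^2" using x0 by simp
  qed
qed



lemma icmul: "integral S (\<lambda>x. (c::real) * f x) = c * integral S f"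
  using integral_cmul[of S c f] by simp

lemma iadd: "continuous_on {-1..1} a \<Longrightarrow> continuous_on {-1..1} b \<Longrightarrow> t \<in> {-1..1} \<Longrightarrow>
  integral {-1..t} (\<lambda>s. a s + b s) = integral {-1..t} a + integral {-1..t} (b::real\<Rightarrow>real)"
  by (intro integral_add integrable_continuous_interval; erule continuous_on_subset; auto)

lemma iadd3: "continuous_on {-1..1} a \<Longrightarrow> continuous_on {-1..1} b \<Longrightarrow> continuous_on {-1..1} c \<Longrightarrow>
  integral {-1..1} (\<lambda>s. a s + b s + c s) = integral {-1..1} a + integral {-1..1} b + integral {-1..1} (c::real\<Rightarrow>real)"
  by (subst integral_add; (intro integral_add integrable_continuous_interval continuous_intros)?; simp add: integral_add integrable_continuous_interval)

lemma ibound: "continuous_on {-1..1} h \<Longrightarrow> (\<forall>t\<in>{-1..1}. \<bar>h t\<bar> \<le> B) \<Longrightarrow> t \<in> {-1..1} \<Longrightarrow>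
  \<bar>integral {-1..t} (h::real\<Rightarrow>real)\<bar> \<le> 2 * B"
proof -
  assume c: "continuous_on {-1..1} h" and b: "\<forall>t\<in>{-1..1}. \<bar>h t\<bar> \<le> B" and t: "t \<in> {-1..1}"
  have B0: "0 \<le> B" using b[rule_format, of 0] by auto
  have "norm (integral {-1..t} h) \<le> B * (t - -1)"
    using t b by (intro integral_bound) (auto intro: continuous_on_subset[OF c])
  also have "\<dots> \<le> B * 2" using t B0 by (intro mult_left_mono) auto
  finally show ?thesis by simp
qed

lemma ibound1: "continuous_on {-1..1} h \<Longrightarrow> (\<forall>t\<in>{-1..1}. \<bar>h t\<bar> \<le> B) \<Longrightarrow>
  \<bar>integral {-1..1} (h::real\<Rightarrow>real)\<bar> \<le> 2 * B"
  using ibound[of h B 1] by simp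

lemma icont: "continuous_on {-1..1} h \<Longrightarrow> continuous_on {-1..1} (\<lambda>t. integral {-1..t} (h::real\<Rightarrow>real))"
  by (rule DERIV_continuous_on[where D=h]) (rule integral_has_real_derivative)



lemma per_e:
  fixes f g x :: "real \<Rightarrow> real"
  assumes cf: "continuous_on {-1..1} f" and cg: "continuous_on {-1..1} g"
    and fb: "\<forall>t\<in>{-1..1}. \<bar>f t\<bar> \<le> M" and gb: "\<forall>t\<in>{-1..1}. \<bar>g t\<bar> \<le> M"
    and sol: "abel_solution f g x" and x0: "x (-1) = e" and x1: "x 1 = e"
    and e: "0 < e" "e \<le> 1/4" "48 * M * e \<le> 1"
  defines "G \<equiv> \<lambda>t. integral {-1..t} g"
  defines "m \<equiv> \<lambda>k::nat. integral {-1..1} (\<lambda>t. f t * (G t) ^ k)"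
  shows "\<bar>G 1\<bar> \<le> 4 * M * e"
    and "G 1 = 0 \<Longrightarrow> \<bar>m 0\<bar> \<le> 12 * M^2 * e"
    and "G 1 = 0 \<Longrightarrow> m 0 = 0 \<Longrightarrow> \<bar>m 1\<bar> \<le> (8 * M^2 + 36 * M^3) * e"
    and "G 1 = 0 \<Longrightarrow> m 0 = 0 \<Longrightarrow> m 1 = 0 \<Longrightarrow> \<bar>m 2\<bar> \<le> (136 * M^3 + 432 * M^4) * e"
proof -
  define D where "D t = f t * (x t) ^ 3 + g t * (x t) ^ 2" for t
  have der: "\<forall>t\<in>{-1..1}. (x has_real_derivative D t) (at t within {-1..1})"
    using sol unfolding abel_solution_def D_def by blast
  have M0: "M \<ge> 0" using fb[rule_format, of 0] by auto
  have cx: "continuous_on {-1..1} x" using der by (intro DERIV_continuous_on) auto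
  have xb: "\<forall>t\<in>{-1..1}. \<bar>x t - e\<bar> \<le> 24 * M * e^2"
    using xbound[OF fb gb sol x0] e by auto
  have "24 * M * e^2 = (48 * M * e) * e / 2" by (simp add: power2_eq_square)
  also have "\<dots> \<le> 1 * e / 2" using e by (intro divide_right_mono mult_right_mono) auto
  finally have se: "24 * M * e^2 \<le> e / 2" by simp
  have xe2: "\<bar>x t - e\<bar> \<le> e / 2" if "t \<in> {-1..1}" for t
    using xb that se by fastforce
  have xpos: "x t > 0" if "t \<in> {-1..1}" for t using xe2[OF that] e(1) by linarith
  have xabs: "\<bar>x t\<bar> \<le> 2 * e" if "t \<in> {-1..1}" for t using xe2[OF that] e(1) by linarith
  define H where "H t = integral {-1..t} (\<lambda>s. f s * x s)" for t
  define F where "F t = integral {-1..t} f" for t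
  define S where "S t = G t + H t" for t
  have cfx: "continuous_on {-1..1} (\<lambda>s. f s * x s)" by (intro continuous_intros cf cx)
  have cG: "continuous_on {-1..1} G" unfolding G_def by (rule icont[OF cg])
  have cH: "continuous_on {-1..1} H" unfolding H_def by (rule icont[OF cfx])
  have cF: "continuous_on {-1..1} F" unfolding F_def by (rule icont[OF cf])
  have cS: "continuous_on {-1..1} S" unfolding S_def by (intro continuous_intros cG cH)
  have Gb: "\<bar>G t\<bar> \<le> 2 * M" if "t \<in> {-1..1}" for t
    unfolding G_def by (rule ibound[OF cg gb that])
  have Hb: "\<bar>H t\<bar> \<le> 4 * M * e" if "t \<in> {-1..1}" for t
  proof -
    have "\<bar>H t\<bar> \<le> 2 * (M * (2 * e))" unfolding H_def
      by (rule ibound[OF cfx _ that]) (intro ballI absmul; auto intro: fb[rule_format] xabs)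
    thus ?thesis by simp
  qed
  have Sb: "\<bar>S t\<bar> \<le> 3 * M" if "t \<in> {-1..1}" for t
  proof -
    have "\<bar>S t\<bar> \<le> 2 * M + 4 * M * e" unfolding S_def using Gb[OF that] Hb[OF that] by simp
    also have "4 * M * e = M * (4 * e)" by simp
    also have "\<dots> \<le> M * 1" using e M0 by (intro mult_left_mono) auto
    finally show ?thesis by simp
  qed
  have phi: "inverse (x t) + G t + H t = inverse e" if t: "t \<in> {-1..1}" for t
  proof -
    have "\<exists>c. \<forall>t\<in>{-1..1}. inverse (x t) + G t + H t = c"
    proof (rule has_field_derivative_zero_constant)
      fix t :: real assume t: "t \<in> {-1..1}"
      have d1: "((\<lambda>t. inverse (x t)) has_real_derivative (- (D t * inverse (x t ^ Suc (Suc 0)))))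
          (at t within {-1..1})" using DERIV_inverse_fun der t xpos[OF t] by fastforce
      have d2: "(G has_real_derivative g t) (at t within {-1..1})"
        unfolding G_def by (rule integral_has_real_derivative[OF cg t])
      have d3: "(H has_real_derivative f t * x t) (at t within {-1..1})"
        unfolding H_def by (rule integral_has_real_derivative[OF cfx t])
      have "((\<lambda>t. inverse (x t) + G t + H t) has_real_derivative
          (- (D t * inverse (x t ^ Suc (Suc 0)))) + g t + f t * x t) (at t within {-1..1})"
        by (intro DERIV_add d1 d2 d3)
      moreover have "(- (D t * inverse (x t ^ Suc (Suc 0)))) + g t + f t * x t = 0"
        using xpos[OF t] by (simp add: D_def field_simps power2_eq_square power3_eq_cube)
      ultimately show "((\<lambda>t. inverse (x t) + G t + H t) has_real_derivative 0) (at t within {-1..1})"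
        by simp
    qed simp
    then obtain c where c: "\<forall>t\<in>{-1..1}. inverse (x t) + G t + H t = c" by blast
    have "c = inverse e" using c[rule_format, of "-1"] x0 by (simp add: G_def H_def)
    thus ?thesis using c t by simp
  qed
  have key: "x t = e + e * S t * x t" if t: "t \<in> {-1..1}" for t
  proof -
    have "inverse (x t) = inverse e - S t" using phi[OF t] by (simp add: S_def)
    thus ?thesis using xpos[OF t] e by (simp add: field_simps)
  qed
  have GH1: "G 1 + H 1 = 0" using phi[of 1] x1 by simp
  show "\<bar>G 1\<bar> \<le> 4 * M * e" using GH1 Hb[of 1] by simp
  have cfSx: "continuous_on {-1..1} (\<lambda>t. f t * S t * x t)" by (intro continuous_intros cf cS cx)
  have m0: "m 0 = F 1" by (simp add: m_def F_def)
  have H1: "H 1 = e * F 1 + e * integral {-1..1} (\<lambda>t. f t * S t * x t)"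
  proof -
    have "H 1 = integral {-1..1} (\<lambda>t. e * f t + e * (f t * S t * x t))"
      unfolding H_def by (rule integral_cong) (subst key, auto simp: algebra_simps)
    also have "\<dots> = e * F 1 + e * integral {-1..1} (\<lambda>t. f t * S t * x t)"
      by (subst iadd) (auto intro!: continuous_intros cf cS cx simp: icmul F_def)
    finally show ?thesis .
  qed
  have bSx: "\<bar>integral {-1..1} (\<lambda>t. f t * S t * x t)\<bar> \<le> 2 * (M * (3 * M) * (2 * e))"
    by (rule ibound1[OF cfSx]) (intro ballI absmul; auto intro: fb[rule_format] Sb xabs)
  show "\<bar>m 0\<bar> \<le> 12 * M^2 * e" if "G 1 = 0"
  proof -
    have "e * (F 1 + integral {-1..1} (\<lambda>t. f t * S t * x t)) = 0"
      using H1 GH1 that by (simp add: algebra_simps)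
    hence "F 1 = - integral {-1..1} (\<lambda>t. f t * S t * x t)"
      using e(1) by simp
    thus ?thesis using bSx m0 by (simp add: power2_eq_square)
  qed
  have cfS: "continuous_on {-1..1} (\<lambda>t. f t * S t)" by (intro continuous_intros cf cS)
  have cfH: "continuous_on {-1..1} (\<lambda>t. f t * H t)" by (intro continuous_intros cf cH)
  have cfSSx: "continuous_on {-1..1} (\<lambda>t. f t * S t ^ 2 * x t)" by (intro continuous_intros cf cS cx)
  have fS: "integral {-1..1} (\<lambda>t. f t * S t) = m 1 + integral {-1..1} (\<lambda>t. f t * H t)"
  proof -
    have "integral {-1..1} (\<lambda>t. f t * S t) = integral {-1..1} (\<lambda>t. f t * G t + f t * H t)"
      by (simp add: S_def algebra_simps)
    also have "\<dots> = m 1 + integral {-1..1} (\<lambda>t. f t * H t)"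
      by (subst iadd) (auto intro!: continuous_intros cf cG cH simp: m_def)
    finally show ?thesis .
  qed
  have eq_c: "integral {-1..1} (\<lambda>t. f t * S t) + integral {-1..1} (\<lambda>t. f t * S t ^ 2 * x t) = 0"
    if "G 1 = 0" "m 0 = 0"
  proof -
    have "integral {-1..1} (\<lambda>t. f t * S t * x t) = 0" using H1 GH1 that m0 e by simp
    moreover have "integral {-1..1} (\<lambda>t. f t * S t * x t) =
       e * (integral {-1..1} (\<lambda>t. f t * S t) + integral {-1..1} (\<lambda>t. f t * S t ^ 2 * x t))"
    proof -
      have "integral {-1..1} (\<lambda>t. f t * S t * x t) =
          integral {-1..1} (\<lambda>t. e * (f t * S t) + e * (f t * S t ^ 2 * x t))"
        by (rule integral_cong) (subst key, auto simp: algebra_simps power2_eq_square)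
      also have "\<dots> = e * integral {-1..1} (\<lambda>t. f t * S t) + e * integral {-1..1} (\<lambda>t. f t * S t ^ 2 * x t)"
        by (subst iadd) (auto intro!: continuous_intros cf cS cx simp: icmul)
      finally show ?thesis by (simp add: algebra_simps)
    qed
    ultimately show ?thesis using e by simp
  qed
  have bH: "\<bar>integral {-1..1} (\<lambda>t. f t * H t)\<bar> \<le> 2 * (M * (4 * M * e))"
    by (rule ibound1[OF cfH]) (intro ballI absmul; auto intro: fb[rule_format] Hb)
  have S2b: "\<bar>S t ^ 2\<bar> \<le> 9 * M^2" if "t \<in> {-1..1}" for t
    using absmul[OF Sb[OF that] Sb[OF that]] by (simp add: power2_eq_square)
  have S2b': "S t ^ 2 \<le> 9 * M^2" if "t \<in> {-1..1}" for t
    using S2b[OF that] by simp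
  have bSSx: "\<bar>integral {-1..1} (\<lambda>t. f t * S t ^ 2 * x t)\<bar> \<le> 2 * (M * (9 * M^2) * (2 * e))"
    by (rule ibound1[OF cfSSx]) (intro ballI absmul; auto intro: fb[rule_format] S2b S2b' xabs)
  show "\<bar>m 1\<bar> \<le> (8 * M^2 + 36 * M^3) * e" if "G 1 = 0" "m 0 = 0"
  proof -
    have "m 1 = - integral {-1..1} (\<lambda>t. f t * H t) - integral {-1..1} (\<lambda>t. f t * S t ^ 2 * x t)"
      using eq_c[OF that] fS by simp
    hence "\<bar>m 1\<bar> \<le> 2 * (M * (4 * M * e)) + 2 * (M * (9 * M^2) * (2 * e))" using bH bSSx by linarith
    thus ?thesis by (simp add: algebra_simps power2_eq_square power3_eq_cube)
  qed
  show "\<bar>m 2\<bar> \<le> (136 * M^3 + 432 * M^4) * e" if "G 1 = 0" "m 0 = 0" "m 1 = 0"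
  proof -
    define R where "R t = integral {-1..t} (\<lambda>s. f s * (x s - e))" for t
    have cfxe: "continuous_on {-1..1} (\<lambda>s. f s * (x s - e))" by (intro continuous_intros cf cx)
    have cR: "continuous_on {-1..1} R" unfolding R_def by (rule icont[OF cfxe])
    have HR: "H t = e * F t + R t" if t: "t \<in> {-1..1}" for t
    proof -
      have "H t = integral {-1..t} (\<lambda>s. e * f s + f s * (x s - e))"
        unfolding H_def by (simp add: algebra_simps)
      also have "\<dots> = e * F t + R t"
        using t by (subst iadd) (auto intro!: continuous_intros cf cx simp: icmul F_def R_def)
      finally show ?thesis .
    qed
    have Rb: "\<bar>R t\<bar> \<le> 2 * (M * (24 * M * e^2))" if "t \<in> {-1..1}" for t
      unfolding R_def by (rule ibound[OF cfxe _ that]) (intro ballI absmul; auto intro: fb[rule_format] xb[rule_format])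
    have cfF: "continuous_on {-1..1} (\<lambda>t. f t * F t)" by (intro continuous_intros cf cF)
    have cfR: "continuous_on {-1..1} (\<lambda>t. f t * R t)" by (intro continuous_intros cf cR)
    have fH: "integral {-1..1} (\<lambda>t. f t * H t) = e * integral {-1..1} (\<lambda>t. f t * F t) + integral {-1..1} (\<lambda>t. f t * R t)"
    proof -
      have "integral {-1..1} (\<lambda>t. f t * H t) = integral {-1..1} (\<lambda>t. e * (f t * F t) + f t * R t)"
        by (rule integral_cong) (subst HR, auto simp: algebra_simps)
      also have "\<dots> = e * integral {-1..1} (\<lambda>t. f t * F t) + integral {-1..1} (\<lambda>t. f t * R t)"
        by (subst iadd) (auto intro!: continuous_intros cf cF cR simp: icmul)
      finally show ?thesis .
    qed
    have fF: "integral {-1..1} (\<lambda>t. f t * F t) = 0"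
    proof -
      have "((\<lambda>t. f t * F t) has_integral (F 1 ^ 2 / 2 - F (-1) ^ 2 / 2)) {-1..1}"
      proof (rule fundamental_theorem_of_calculus)
        fix t :: real assume t: "t \<in> {-1..1}"
        have dF: "(F has_real_derivative f t) (at t within {-1..1})"
          unfolding F_def by (rule integral_has_real_derivative[OF cf t])
        have "((\<lambda>t. F t * F t / 2) has_real_derivative (f t * F t + f t * F t) / 2) (at t within {-1..1})"
          by (intro DERIV_cdivide DERIV_mult dF)
        thus "((\<lambda>t. F t ^ 2 / 2) has_vector_derivative f t * F t) (at t within {-1..1})"
          by (simp add: power2_eq_square mult.commute has_real_derivative_iff_has_vector_derivative[symmetric])
      qed simp
      moreover have "F 1 = 0" using that m0 by simp
      moreover have "F (-1) = 0" by (simp add: F_def)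
      ultimately show ?thesis by (simp add: integral_unique)
    qed
    have cE1: "continuous_on {-1..1} (\<lambda>t. f t * (S t ^ 2 * (x t - e)))" by (intro continuous_intros cf cS cx)
    have cE2: "continuous_on {-1..1} (\<lambda>t. f t * H t * (S t + G t))" by (intro continuous_intros cf cS cG cH)
    have cfG2: "continuous_on {-1..1} (\<lambda>t. f t * G t ^ 2)" by (intro continuous_intros cf cG)
    have fSSx: "integral {-1..1} (\<lambda>t. f t * S t ^ 2 * x t) = e * m 2 +
       integral {-1..1} (\<lambda>t. f t * (S t ^ 2 * (x t - e))) + e * integral {-1..1} (\<lambda>t. f t * H t * (S t + G t))"
    proof -
      have "integral {-1..1} (\<lambda>t. f t * S t ^ 2 * x t) = integral {-1..1}
          (\<lambda>t. (e * (f t * G t ^ 2) + f t * (S t ^ 2 * (x t - e))) + e * (f t * H t * (S t + G t)))"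
        by (rule integral_cong) (simp add: S_def algebra_simps power2_eq_square)
      also have "\<dots> = e * m 2 +
       integral {-1..1} (\<lambda>t. f t * (S t ^ 2 * (x t - e))) + e * integral {-1..1} (\<lambda>t. f t * H t * (S t + G t))"
        by (subst iadd3) (auto intro!: continuous_intros cf cS cx cG cH simp: icmul m_def)
      finally show ?thesis .
    qed
    have bR: "\<bar>integral {-1..1} (\<lambda>t. f t * R t)\<bar> \<le> 2 * (M * (2 * (M * (24 * M * e^2))))"
      by (rule ibound1[OF cfR]) (intro ballI absmul; auto intro: fb[rule_format] Rb[simplified])
    have bE1: "\<bar>integral {-1..1} (\<lambda>t. f t * (S t ^ 2 * (x t - e)))\<bar> \<le> 2 * (M * (9 * M^2 * (24 * M * e^2)))"
      by (rule ibound1[OF cE1]) (intro ballI absmul; auto intro: fb[rule_format] S2b S2b' xb[rule_format])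
    have SGb: "\<bar>S t + G t\<bar> \<le> 5 * M" if "t \<in> {-1..1}" for t
      using Sb[OF that] Gb[OF that] by linarith
    have bE2: "\<bar>integral {-1..1} (\<lambda>t. f t * H t * (S t + G t))\<bar> \<le> 2 * (M * (4 * M * e) * (5 * M))"
      by (rule ibound1[OF cE2]) (intro ballI absmul; auto intro: fb[rule_format] Hb SGb)
    have "e * m 2 = - integral {-1..1} (\<lambda>t. f t * R t) - integral {-1..1} (\<lambda>t. f t * (S t ^ 2 * (x t - e)))
        - e * integral {-1..1} (\<lambda>t. f t * H t * (S t + G t))"
      using eq_c[OF that(1,2)] fS that(3) fH fF fSSx by simp
    moreover have "\<bar>e * integral {-1..1} (\<lambda>t. f t * H t * (S t + G t))\<bar> \<le> e * (2 * (M * (4 * M * e) * (5 * M)))"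
      using bE2 e by (simp add: abs_mult mult_left_mono)
    ultimately have "\<bar>e * m 2\<bar> \<le> 2 * (M * (2 * (M * (24 * M * e^2)))) + 2 * (M * (9 * M^2 * (24 * M * e^2)))
        + e * (2 * (M * (4 * M * e) * (5 * M)))"
      using bR bE1 by linarith
    also have "\<dots> = e * ((136 * M^3 + 432 * M^4) * e)"
      by (simp add: algebra_simps power2_eq_square power3_eq_cube power4_eq_xxxx)
    finally show ?thesis using e by (simp add: abs_mult)
  qed
qed



lemma small_zero:
  fixes a K d :: real
  assumes d: "d > 0" and h: "\<And>e. 0 < e \<Longrightarrow> e < d \<Longrightarrow> \<bar>a\<bar> \<le> K * e"
  shows "a = 0"
proof (rule ccontr)
  assume a: "a \<noteq> 0"
  define e where "e = min (d/2) (\<bar>a\<bar> / (2 * (\<bar>K\<bar> + 1)))"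
  have e0: "0 < e" "e < d" using d a by (auto simp: e_def)
  have "\<bar>a\<bar> \<le> K * e" using h[OF e0] .
  also have "\<dots> \<le> (\<bar>K\<bar> + 1) * e" using e0 by (intro mult_right_mono) auto
  also have "\<dots> \<le> (\<bar>K\<bar> + 1) * (\<bar>a\<bar> / (2 * (\<bar>K\<bar> + 1)))"
    by (intro mult_left_mono) (auto simp: e_def)
  also have "\<dots> = \<bar>a\<bar> / 2" by (simp add: field_simps)
  finally show False using a by simp
qed

theorem theorem1:
  fixes f g :: "real \<Rightarrow> real"
  assumes "real_analytic_on f {-1..1}" and "real_analytic_on g {-1..1}"
    and "abel_center f g"
  shows "\<forall>k\<in>{0,1,2::nat}.
           integral {-1..1} (\<lambda>t. f t * (integral {-1..t} g) ^ k) = 0"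
proof -
  have cf: "continuous_on {-1..1} f" by (rule analytic_cont[OF assms(1)])
  have cg: "continuous_on {-1..1} g" by (rule analytic_cont[OF assms(2)])
  obtain Mf where Mf: "\<forall>y\<in>f ` {-1..1}. norm y \<le> Mf"
    using compact_imp_bounded[OF compact_continuous_image[OF cf compact_Icc]] bounded_iff by blast
  obtain Mg where Mg: "\<forall>y\<in>g ` {-1..1}. norm y \<le> Mg"
    using compact_imp_bounded[OF compact_continuous_image[OF cg compact_Icc]] bounded_iff by blast
  define M where "M = max Mf Mg"
  have fb: "\<forall>t\<in>{-1..1}. \<bar>f t\<bar> \<le> M" using Mf by (force simp: M_def)
  have gb: "\<forall>t\<in>{-1..1}. \<bar>g t\<bar> \<le> M" using Mg by (force simp: M_def)
  have M0: "M \<ge> 0" using fb[rule_format, of 0] by auto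
  obtain \<delta> where \<delta>: "\<delta> > 0" and cen: "\<And>x0. \<bar>x0\<bar> < \<delta> \<Longrightarrow>
        (\<exists>x. abel_solution f g x \<and> x (-1) = x0) \<and>
        (\<forall>x. abel_solution f g x \<and> x (-1) = x0 \<longrightarrow> x 1 = x (-1))"
    using assms(3) unfolding abel_center_def by blast
  define d where "d = min \<delta> (min (1/4) (1 / (48 * (M + 1))))"
  have d0: "d > 0" using \<delta> M0 by (auto simp: d_def)
  define G where "G = (\<lambda>t. integral {-1..t} g)"
  define m where "m = (\<lambda>k::nat. integral {-1..1} (\<lambda>t. f t * (G t) ^ k))"
  have P: "\<bar>G 1\<bar> \<le> 4 * M * e \<and>
    (G 1 = 0 \<longrightarrow> \<bar>m 0\<bar> \<le> 12 * M^2 * e) \<and>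
    (G 1 = 0 \<longrightarrow> m 0 = 0 \<longrightarrow> \<bar>m 1\<bar> \<le> (8 * M^2 + 36 * M^3) * e) \<and>
    (G 1 = 0 \<longrightarrow> m 0 = 0 \<longrightarrow> m 1 = 0 \<longrightarrow> \<bar>m 2\<bar> \<le> (136 * M^3 + 432 * M^4) * e)"
    if e: "0 < e" "e < d" for e
  proof -
    have "\<bar>e\<bar> < \<delta>" using e by (simp add: d_def)
    from cen[OF this] obtain x where sol: "abel_solution f g x" and x0: "x (-1) = e"
      and x1: "x 1 = e" by auto
    have e4: "e \<le> 1/4" using e by (simp add: d_def)
    have "e < 1 / (48 * (M + 1))" using e by (simp add: d_def)
    hence "48 * (M + 1) * e < 1" using M0 by (simp add: field_simps)
    moreover have "48 * M * e \<le> 48 * (M + 1) * e" using e by (intro mult_right_mono) auto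
    ultimately have e48: "48 * M * e \<le> 1" by linarith
    note R = per_e[OF cf cg fb gb sol x0 x1 e(1) e4 e48]
    show ?thesis using R unfolding G_def m_def by blast
  qed
  have G1: "G 1 = 0" using P by (intro small_zero[OF d0]) blast
  have m0: "m 0 = 0" using P G1 by (intro small_zero[OF d0]) blast
  have m1: "m 1 = 0" using P G1 m0 by (intro small_zero[OF d0]) blast
  have m2: "m 2 = 0" using P G1 m0 m1 by (intro small_zero[OF d0]) blast
  show ?thesis using m0 m1 m2 unfolding m_def G_def by auto
qed

end
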